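(* Let $G$ be a finite, simple, connected graph with a fixed root $r\in V(G)$. Then every bunch $B$ of any level $n$ satisfies $\max_{p,q\in B} d_G(p,q)\le W(G)+2$.
   Context: The level of $x$ is $\ell(x)=d_G(r,x)$. For $n\ge0$, $R(n)$ is the set of edges $xy$ with $\max\{\ell(x),\ell(y)\}>n$. Blocks of level $n$ are the equivalence classes of the level-$n$ vertices under: $x\sim y$ iff $x=y$ or $x,y$ are joined by a path with all edges in $R(n)$. Bunches of level $n$ are unions of blocks of level $n$ forming the classes of the transitive closure of "there is an edge of $G$ between the two blocks". For a root $r'$ and its levels $\ell_{r'}$ and sets $R_{r'}(n)$, write $x\simeq_n y$ if $x,y$ are in the same connected component of $(V(G),R_{r'}(n))$; $W(r')=\max_{n\ge0}\max\{d_G(x,y):\ell_{r'}(x)=\ell_{r'}(y)=n,\ x\simeq_n y\}$, and the cycle width is $W(G)=\max_{r'\in V(G)} W(r')$. *)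

theory Defs
  imports Main
begin

definition simple_graph :: "'a set \<Rightarrow> ('a \<Rightarrow> 'a \<Rightarrow> bool) \<Rightarrow> bool" where
  "simple_graph V E \<longleftrightarrow> finite V \<and> (\<forall>x y. E x y \<longrightarrow> x \<in> V \<and> y \<in> V)
     \<and> (\<forall>x y. E x y \<longrightarrow> E y x) \<and> (\<forall>x. \<not> E x x)"

definition connected_graph :: "'a set \<Rightarrow> ('a \<Rightarrow> 'a \<Rightarrow> bool) \<Rightarrow> bool" where
  "connected_graph V E \<longleftrightarrow> V \<noteq> {} \<and> (\<forall>x\<in>V. \<forall>y\<in>V. E\<^sup>*\<^sup>* x y)"

definition gdist :: "('a \<Rightarrow> 'a \<Rightarrow> bool) \<Rightarrow> 'a \<Rightarrow> 'a \<Rightarrow> nat" where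
  "gdist E x y = (LEAST k. \<exists>p. length p = Suc k \<and> hd p = x \<and> last p = y \<and> successively E p)"

definition level :: "('a \<Rightarrow> 'a \<Rightarrow> bool) \<Rightarrow> 'a \<Rightarrow> 'a \<Rightarrow> nat" where
  "level E r x = gdist E r x"

definition Redge :: "('a \<Rightarrow> 'a \<Rightarrow> bool) \<Rightarrow> 'a \<Rightarrow> nat \<Rightarrow> 'a \<Rightarrow> 'a \<Rightarrow> bool" where
  "Redge E r n x y \<longleftrightarrow> E x y \<and> max (level E r x) (level E r y) > n"

definition Rconn :: "('a \<Rightarrow> 'a \<Rightarrow> bool) \<Rightarrow> 'a \<Rightarrow> nat \<Rightarrow> 'a \<Rightarrow> 'a \<Rightarrow> bool" where
  "Rconn E r n x y \<longleftrightarrow> (Redge E r n)\<^sup>*\<^sup>* x y"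

definition level_set :: "'a set \<Rightarrow> ('a \<Rightarrow> 'a \<Rightarrow> bool) \<Rightarrow> 'a \<Rightarrow> nat \<Rightarrow> 'a set" where
  "level_set V E r n = {x \<in> V. level E r x = n}"

definition blocks :: "'a set \<Rightarrow> ('a \<Rightarrow> 'a \<Rightarrow> bool) \<Rightarrow> 'a \<Rightarrow> nat \<Rightarrow> 'a set set" where
  "blocks V E r n = {{y \<in> level_set V E r n. Rconn E r n x y} | x. x \<in> level_set V E r n}"

definition block_adj :: "'a set \<Rightarrow> ('a \<Rightarrow> 'a \<Rightarrow> bool) \<Rightarrow> 'a \<Rightarrow> nat \<Rightarrow> ('a set \<times> 'a set) set" where
  "block_adj V E r n = {(B1, B2). B1 \<in> blocks V E r n \<and> B2 \<in> blocks V E r n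
      \<and> (\<exists>x\<in>B1. \<exists>y\<in>B2. E x y)}"

definition bunches :: "'a set \<Rightarrow> ('a \<Rightarrow> 'a \<Rightarrow> bool) \<Rightarrow> 'a \<Rightarrow> nat \<Rightarrow> 'a set set" where
  "bunches V E r n = {\<Union> {B. (B0, B) \<in> (block_adj V E r n)\<^sup>*} | B0. B0 \<in> blocks V E r n}"

definition W_root :: "'a set \<Rightarrow> ('a \<Rightarrow> 'a \<Rightarrow> bool) \<Rightarrow> 'a \<Rightarrow> nat" where
  "W_root V E r' = Max {gdist E x y | x y n. x \<in> V \<and> y \<in> V \<and> level E r' x = n \<and>
      level E r' y = n \<and> Rconn E r' n x y}"

definition cycle_width :: "'a set \<Rightarrow> ('a \<Rightarrow> 'a \<Rightarrow> bool) \<Rightarrow> nat" where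
  "cycle_width V E = Max (W_root V E ` V)"

end

theory Submission
  imports Defs
begin

definition walk :: "('a \<Rightarrow> 'a \<Rightarrow> bool) \<Rightarrow> 'a \<Rightarrow> 'a \<Rightarrow> nat \<Rightarrow> bool" where
  "walk E x y k \<longleftrightarrow> (\<exists>p. length p = Suc k \<and> hd p = x \<and> last p = y \<and> successively E p)"

lemma gdist_walk: "gdist E x y = (LEAST k. walk E x y k)"
  unfolding gdist_def walk_def by simp

lemma walk_snoc:
  assumes "walk E x y k" "E y z" shows "walk E x z (Suc k)"
proof -
  obtain p where p: "length p = Suc k" "hd p = x" "last p = y" "successively E p"
    using assms(1) unfolding walk_def by blast
  have "p \<noteq> []" using p(1) by auto
  then have "successively E (p @ [z])" using p assms(2) by (auto simp: successively_append_iff)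
  moreover have "hd (p @ [z]) = x" using \<open>p \<noteq> []\<close> p by simp
  ultimately show ?thesis unfolding walk_def using p(1)
    by (intro exI[of _ "p @ [z]"]) simp
qed

lemma walk_cons:
  assumes "walk E y z k" "E x y" shows "walk E x z (Suc k)"
proof -
  obtain p where p: "length p = Suc k" "hd p = y" "last p = z" "successively E p"
    using assms(1) unfolding walk_def by blast
  have "p \<noteq> []" using p(1) by auto
  then have "successively E (x # p)" using p assms(2) by (auto simp: successively_Cons)
  thus ?thesis unfolding walk_def using p \<open>p \<noteq> []\<close>
    by (intro exI[of _ "x # p"]) simp
qed

lemma walk_rtranclp: "E\<^sup>*\<^sup>* x y \<Longrightarrow> \<exists>k. walk E x y k"
proof (induction rule: rtranclp_induct)
  case base
  have "walk E x x 0" unfolding walk_def by (rule exI[of _ "[x]"]) simp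
  then show ?case by (rule exI)
next
  case (step y z)
  then obtain k where "walk E x y k" by (elim exE)
  then have "walk E x z (Suc k)" using step(2) by (rule walk_snoc)
  then show ?case by (rule exI)
qed

lemma gdist_le: "walk E x y k \<Longrightarrow> gdist E x y \<le> k"
  unfolding gdist_walk by (rule Least_le[of "walk E x y"])

lemma gdist_walk_ex: "walk E x y k \<Longrightarrow> walk E x y (gdist E x y)"
  unfolding gdist_walk by (rule LeastI[of "walk E x y"])

lemma walk_pred:
  assumes "walk E x y (Suc m)"
  shows "\<exists>z. walk E x z m \<and> E z y"
proof -
  obtain p where p: "length p = Suc (Suc m)" "hd p = x" "last p = y" "successively E p"
    using assms(1) unfolding walk_def by blast
  have ne: "p \<noteq> []" using p(1) by auto
  have bne: "butlast p \<noteq> []" using p(1) by (cases p) auto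
  have s: "successively E (butlast p @ [last p])" using p(4) ne by simp
  hence s1: "successively E (butlast p)" and e: "E (last (butlast p)) (last p)"
    using bne by (auto simp: successively_append_iff)
  have "hd (butlast p) = x" using bne p(2) ne by (metis append_butlast_last_id hd_append2)
  hence "walk E x (last (butlast p)) m" unfolding walk_def using s1 p(1)
    by (intro exI[of _ "butlast p"]) simp
  thus ?thesis using e p(3) by blast
qed

lemma walk_zero: "walk E x y 0 \<Longrightarrow> x = y"
  unfolding walk_def by (auto simp: length_Suc_conv)

lemma level0:
  assumes "E\<^sup>*\<^sup>* r x" "level E r x = 0" shows "x = r"
proof -
  obtain k where "walk E r x k" using walk_rtranclp[OF assms(1)] by (elim exE)
  then have "walk E r x (gdist E r x)" by (rule gdist_walk_ex)
  then have "walk E r x 0" using assms(2) unfolding level_def by simp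
  then show ?thesis using walk_zero by metis
qed

theorem mainTheorem13:
  fixes V :: "'a set" and E :: "'a \<Rightarrow> 'a \<Rightarrow> bool" and r :: 'a and n :: nat and B :: "'a set"
  assumes "simple_graph V E" and "connected_graph V E" and "r \<in> V"
    and "B \<in> bunches V E r n"
  shows "\<forall>p\<in>B. \<forall>q\<in>B. gdist E p q \<le> cycle_width V E + 2"
proof -
  have sg: "finite V" "\<And>x y. E x y \<Longrightarrow> x \<in> V \<and> y \<in> V" "\<And>x y. E x y \<Longrightarrow> E y x" "\<And>x. \<not> E x x"
    using assms(1) unfolding simple_graph_def by blast+
  have conn: "\<exists>k. walk E x y k" if "x \<in> V" "y \<in> V" for x y
  proof -
    have "E\<^sup>*\<^sup>* x y" using assms(2) that unfolding connected_graph_def by blast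
    thus ?thesis by (rule walk_rtranclp)
  qed
  let ?R = "Redge E r (n - 1)"
  have Rsym: "\<And>x y. Redge E r m x y \<Longrightarrow> Redge E r m y x" for m
    using sg(3) unfolding Redge_def by (auto simp: max.commute)
  have Rsym_rt: "(Redge E r m)\<^sup>*\<^sup>* x y \<Longrightarrow> (Redge E r m)\<^sup>*\<^sup>* y x" for m x y
  proof (induction rule: rtranclp_induct)
    case base then show ?case by simp
  next
    case (step y z) then show ?case using Rsym
      by (meson converse_rtranclp_into_rtranclp)
  qed
  have Rmono: "(Redge E r n)\<^sup>*\<^sup>* x y \<Longrightarrow> ?R\<^sup>*\<^sup>* x y" for x y
    by (rule rtranclp_mono[THEN predicate2D, rotated]) (auto simp: Redge_def)
  obtain B0 where B0: "B0 \<in> blocks V E r n" and BB: "B = \<Union> {B. (B0, B) \<in> (block_adj V E r n)\<^sup>*}"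
    using assms(4) unfolding bunches_def by blast
  have inblock: "\<And>C x y. C \<in> blocks V E r n \<Longrightarrow> x \<in> C \<Longrightarrow> y \<in> C \<Longrightarrow> ?R\<^sup>*\<^sup>* x y"
  proof -
    fix C x y assume C: "C \<in> blocks V E r n" "x \<in> C" "y \<in> C"
    then obtain z where "C = {y \<in> level_set V E r n. Rconn E r n z y}"
      unfolding blocks_def by blast
    then have "(Redge E r n)\<^sup>*\<^sup>* z x" "(Redge E r n)\<^sup>*\<^sup>* z y" using C unfolding Rconn_def by auto
    then have "(Redge E r n)\<^sup>*\<^sup>* x y" using Rsym_rt by (meson rtranclp_trans)
    thus "?R\<^sup>*\<^sup>* x y" by (rule Rmono)
  qed
  have blev: "\<And>C x. C \<in> blocks V E r n \<Longrightarrow> x \<in> C \<Longrightarrow> x \<in> V \<and> level E r x = n"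
    unfolding blocks_def level_set_def by auto
  have bne: "\<And>C. C \<in> blocks V E r n \<Longrightarrow> C \<noteq> {}"
  proof -
    fix C assume "C \<in> blocks V E r n"
    then obtain z where z: "z \<in> level_set V E r n" "C = {y \<in> level_set V E r n. Rconn E r n z y}"
      unfolding blocks_def by blast
    then have "z \<in> C" unfolding Rconn_def by simp
    thus "C \<noteq> {}" by blast
  qed
  have reach: "(B0, C) \<in> (block_adj V E r n)\<^sup>* \<Longrightarrow> \<forall>x\<in>B0. \<forall>y\<in>C. ?R\<^sup>*\<^sup>* x y" for C
  proof (induction rule: rtrancl_induct)
    case base then show ?case using inblock B0 by blast
  next
    case (step C D)
    then obtain u v where uv: "u \<in> C" "v \<in> D" "E u v" "C \<in> blocks V E r n" "D \<in> blocks V E r n"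
      unfolding block_adj_def by blast
    have "?R u v"
    proof (cases n)
      case 0
      have "u \<in> V" "level E r u = 0" "v \<in> V" "level E r v = 0" using uv blev 0 by blast+
      moreover have "E\<^sup>*\<^sup>* r u" "E\<^sup>*\<^sup>* r v" using assms(2,3) calculation
        unfolding connected_graph_def by blast+
      ultimately have "u = r" "v = r" using level0 by metis+
      then show ?thesis using uv sg(4) by simp
    next
      case (Suc k)
      then show ?thesis using uv blev unfolding Redge_def by auto
    qed
    show ?case
    proof (intro ballI)
      fix x y assume "x \<in> B0" "y \<in> D"
      have "?R\<^sup>*\<^sup>* x u" using step.IH \<open>x \<in> B0\<close> uv by blast
      moreover have "?R\<^sup>*\<^sup>* v y" using inblock uv \<open>y \<in> D\<close> by blast
      ultimately show "?R\<^sup>*\<^sup>* x y" using \<open>?R u v\<close>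
        by (meson rtranclp.rtrancl_into_rtrancl rtranclp_trans)
    qed
  qed
  have Bprop: "\<And>x. x \<in> B \<Longrightarrow> x \<in> V \<and> level E r x = n"
  proof -
    fix x assume "x \<in> B"
    then obtain C where "(B0, C) \<in> (block_adj V E r n)\<^sup>*" "x \<in> C" using BB by blast
    moreover have "C \<in> blocks V E r n" using calculation(1) B0
      by (induction rule: rtrancl_induct) (auto simp: block_adj_def)
    ultimately show "x \<in> V \<and> level E r x = n" using blev by blast
  qed
  have Rpq: "\<And>p q. p \<in> B \<Longrightarrow> q \<in> B \<Longrightarrow> ?R\<^sup>*\<^sup>* p q"
  proof -
    fix p q assume "p \<in> B" "q \<in> B"
    obtain x where x: "x \<in> B0" using bne B0 by blast
    obtain C D where "(B0, C) \<in> (block_adj V E r n)\<^sup>*" "p \<in> C"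
      "(B0, D) \<in> (block_adj V E r n)\<^sup>*" "q \<in> D" using BB \<open>p \<in> B\<close> \<open>q \<in> B\<close> by blast
    then have "?R\<^sup>*\<^sup>* x p" "?R\<^sup>*\<^sup>* x q" using reach x by blast+
    then show "?R\<^sup>*\<^sup>* p q" using Rsym_rt by (meson rtranclp_trans)
  qed
  let ?S = "{gdist E x y | x y m. x \<in> V \<and> y \<in> V \<and> level E r x = m \<and>
      level E r y = m \<and> Rconn E r m x y}"
  have Sfin: "finite ?S"
  proof -
    have "?S \<subseteq> (\<lambda>(x,y). gdist E x y) ` (V \<times> V)" by auto
    thus ?thesis using sg(1) finite_subset by blast
  qed
  have WG: "W_root V E r \<le> cycle_width V E"
    unfolding cycle_width_def using sg(1) assms(3) by simp
  have pred: "\<And>p. p \<in> V \<Longrightarrow> level E r p = Suc m \<Longrightarrow> \<exists>p'. E p' p \<and> level E r p' = m" for m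
  proof -
    fix p assume p: "p \<in> V" "level E r p = Suc m"
    obtain k where "walk E r p k" using conn[OF assms(3) p(1)] by (elim exE)
    then have "walk E r p (gdist E r p)" by (rule gdist_walk_ex)
    then have "walk E r p (Suc m)" using p(2) unfolding level_def by simp
    then have "\<exists>z. walk E r z m \<and> E z p" by (rule walk_pred)
    then obtain z where z: "walk E r z m" "E z p" by blast
    have l1: "gdist E r z \<le> m" using z(1) by (rule gdist_le)
    have "walk E r z (gdist E r z)" using z(1) by (rule gdist_walk_ex)
    then have "walk E r p (Suc (gdist E r z))" using z(2) by (rule walk_snoc)
    then have "gdist E r p \<le> Suc (gdist E r z)" by (rule gdist_le)
    then have "Suc m \<le> Suc (gdist E r z)" using p(2) unfolding level_def by simp
    then have "level E r z = m" using l1 unfolding level_def by simp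
    thus "\<exists>p'. E p' p \<and> level E r p' = m" using z(2) by blast
  qed
  show ?thesis
  proof (intro ballI)
    fix p q assume pq: "p \<in> B" "q \<in> B"
    show "gdist E p q \<le> cycle_width V E + 2"
    proof (cases n)
      case 0
      have "\<And>x. x \<in> B \<Longrightarrow> x = r"
      proof -
        fix x assume "x \<in> B"
        then have "x \<in> V" "gdist E r x = 0" using Bprop 0 unfolding level_def by auto
        then obtain k where "walk E r x k" using conn[OF assms(3)] by blast
        then have "walk E r x (gdist E r x)" by (rule gdist_walk_ex)
        then have "walk E r x 0" using \<open>gdist E r x = 0\<close> by simp
        thus "x = r" by (rule walk_zero[symmetric])
      qed
      then have "p = q" using pq by blast
      have "walk E p q 0" unfolding walk_def \<open>p = q\<close> by (rule exI[of _ "[q]"]) simp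
      then have "gdist E p q \<le> 0" by (rule gdist_le)
      thus ?thesis by simp
    next
      case (Suc m)
      have pV: "p \<in> V" "level E r p = Suc m" using Bprop[OF pq(1)] Suc by auto
      have qV: "q \<in> V" "level E r q = Suc m" using Bprop[OF pq(2)] Suc by auto
      obtain p' where p': "E p' p" "level E r p' = m" using pred[OF pV] by (elim exE conjE)
      obtain q' where q': "E q' q" "level E r q' = m" using pred[OF qV] by (elim exE conjE)
      have "?R p' p" using p' pV Suc unfolding Redge_def by auto
      moreover have "?R q q'" using q' qV Suc sg(3) unfolding Redge_def by auto
      moreover have "?R\<^sup>*\<^sup>* p q" using Rpq[OF pq] .
      ultimately have "?R\<^sup>*\<^sup>* p' q'"
        by (meson converse_rtranclp_into_rtranclp rtranclp.rtrancl_into_rtrancl)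
      then have "Rconn E r m p' q'" using Suc unfolding Rconn_def by simp
      moreover have "p' \<in> V" "q' \<in> V" using sg(2)[OF p'(1)] sg(2)[OF q'(1)] by auto
      ultimately have "gdist E p' q' \<in> ?S" using p'(2) q'(2) by blast
      then have d: "gdist E p' q' \<le> W_root V E r" unfolding W_root_def using Sfin by simp
      obtain k where "walk E p' q' k" using conn[OF \<open>p' \<in> V\<close> \<open>q' \<in> V\<close>] by (elim exE)
      then have "walk E p' q' (gdist E p' q')" by (rule gdist_walk_ex)
      then have "walk E p' q (Suc (gdist E p' q'))" using q'(1) by (rule walk_snoc)
      then have "walk E p q (Suc (Suc (gdist E p' q')))" using sg(3)[OF p'(1)] by (rule walk_cons)
      then have "gdist E p q \<le> Suc (Suc (gdist E p' q'))" by (rule gdist_le)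
      thus ?thesis using d WG by simp
    qed
  qed
qed

end
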